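(* Let $A \in \mathbb{R}^{m \times r}$, $b \in \mathbb{R}^m$, and $P = \{ x \in \mathbb{R}^r \mid Ax \ge b\}$. Then $P$ has only finitely many convex-conformally non-decomposable vectors.
   Context: For $x \in \mathbb{R}^n$, $\operatorname{sign}(x) \in \{-,0,+\}^n$ is obtained by applying the sign function componentwise; the relations $0<-$, $0<+$ induce a componentwise partial order on $\{-,0,+\}^n$. A vector $x \in P$ is convex-conformally non-decomposable if for all $x^1,x^2 \in P$ with $\operatorname{sign}(x^1),\operatorname{sign}(x^2) \le \operatorname{sign}(x)$ and all $0<\lambda<1$, $x = \lambda x^1 + (1-\lambda)x^2$ implies $x^1 = x^2$. *)

theory Defs
  imports "HOL-Analysis.Analysis"
begin

text \<open>Sign vectors: sign x is the componentwise sign, with values -1, 0, 1 standing for -, 0, +.\<close>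
definition sign_vec :: "real ^ 'n \<Rightarrow> real ^ 'n" where
  "sign_vec x = (\<chi> i. sgn (x $ i))"

text \<open>Componentwise partial order on sign vectors induced by 0 < - and 0 < +.\<close>
definition sign_le :: "real ^ 'n \<Rightarrow> real ^ 'n \<Rightarrow> bool" where
  "sign_le s t \<longleftrightarrow> (\<forall>i. s $ i = 0 \<or> s $ i = t $ i)"

definition cc_nondecomposable :: "(real ^ 'n) set \<Rightarrow> real ^ 'n \<Rightarrow> bool" where
  "cc_nondecomposable P x \<longleftrightarrow> x \<in> P \<and>
     (\<forall>x1\<in>P. \<forall>x2\<in>P. \<forall>l::real.
        sign_le (sign_vec x1) (sign_vec x) \<and> sign_le (sign_vec x2) (sign_vec x) \<and>
        0 < l \<and> l < 1 \<and> x = l *\<^sub>R x1 + (1 - l) *\<^sub>R x2 \<longrightarrow> x1 = x2)"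

end

theory Submission
  imports Defs
begin

lemma sign_set_finite: "finite {v::real^'n. \<forall>i. v $ i \<in> {-1,0,1}}"
proof -
  have "{v::real^'n. \<forall>i. v $ i \<in> {-1,0,1}} \<subseteq> vec_lambda ` (PiE UNIV (\<lambda>_. {-1,0,1::real}))"
  proof
    fix v :: "real^'n" assume "v \<in> {v. \<forall>i. v $ i \<in> {-1,0,1}}"
    then have "(\<lambda>i. v $ i) \<in> PiE UNIV (\<lambda>_. {-1,0,1::real})" by auto
    then show "v \<in> vec_lambda ` (PiE UNIV (\<lambda>_. {-1,0,1::real}))"
      by (metis image_eqI vec_lambda_eta)
  qed
  moreover have "finite (PiE (UNIV::'n set) (\<lambda>_. {-1,0,1::real}))"
    by (rule finite_PiE) auto
  ultimately show ?thesis by (meson finite_imageI finite_subset)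
qed

lemma orthant_polyhedron:
  fixes s :: "real^'n"
  shows "polyhedron {y::real^'n. sign_le (sign_vec y) s}"
proof -
  define C where "C i = {y::real^'n. sgn (y $ i) = 0 \<or> sgn (y$i) = s $ i}" for i
  have eq: "{y::real^'n. sign_le (sign_vec y) s} = \<Inter> (range C)"
    by (auto simp: C_def sign_le_def sign_vec_def)
  have "polyhedron (C i)" for i
  proof -
    have "s$i = 1 \<or> s$i = -1 \<or> (s$i \<noteq> 1 \<and> s$i \<noteq> -1)" by auto
    moreover
    { assume "s$i = 1"
      then have "C i = {y. axis i 1 \<bullet> y \<ge> 0}"
        by (auto simp: C_def sgn_if inner_commute cart_eq_inner_axis[symmetric])
      then have ?thesis using polyhedron_halfspace_ge by metis }
    moreover
    { assume "s$i = -1"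
      then have "C i = {y. axis i 1 \<bullet> y \<le> 0}"
        by (auto simp: C_def sgn_if inner_commute cart_eq_inner_axis[symmetric])
      then have ?thesis using polyhedron_halfspace_le by metis }
    moreover
    { assume "s$i \<noteq> 1 \<and> s$i \<noteq> -1"
      then have "C i = {y. axis i 1 \<bullet> y = 0}"
        by (auto simp: C_def sgn_if inner_commute cart_eq_inner_axis[symmetric])
      then have ?thesis using polyhedron_hyperplane by metis }
    ultimately show ?thesis by blast
  qed
  then show ?thesis unfolding eq by (intro polyhedron_Inter) auto
qed

lemma P_polyhedron:
  fixes A :: "real ^ 'r ^ 'm" and b :: "real ^ 'm"
  shows "polyhedron {x. \<forall>i. (A *v x) $ i \<ge> b $ i}"
proof -
  have eq: "{x. \<forall>i. (A *v x) $ i \<ge> b $ i} = (\<Inter>i. {x. (A $ i) \<bullet> x \<ge> b $ i})"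
    by (auto simp: matrix_vector_mult_def inner_vec_def mult.commute)
  show ?thesis unfolding eq by (intro polyhedron_Inter) (auto intro: polyhedron_halfspace_ge)
qed

theorem proposition5:
  fixes A :: "real ^ 'r ^ 'm" and b :: "real ^ 'm" and P :: "(real ^ 'r) set"
  assumes "P = {x. \<forall>i. (A *v x) $ i \<ge> b $ i}"
  shows "finite {x. cc_nondecomposable P x}"
proof -
  define S where "S = {v::real^'r. \<forall>i. v $ i \<in> {-1,0,1}}"
  define Q where "Q s = P \<inter> {y. sign_le (sign_vec y) s}" for s
  have fin: "finite (\<Union>s\<in>S. {v. v extreme_point_of Q s})"
  proof (intro finite_UN_I)
    show "finite S" unfolding S_def by (rule sign_set_finite)
    fix s show "finite {v. v extreme_point_of Q s}"
      unfolding Q_def assms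
      by (intro finite_polyhedron_extreme_points polyhedron_Int P_polyhedron orthant_polyhedron)
  qed
  have "{x. cc_nondecomposable P x} \<subseteq> (\<Union>s\<in>S. {v. v extreme_point_of Q s})"
  proof
    fix x assume "x \<in> {x. cc_nondecomposable P x}"
    then have cc: "cc_nondecomposable P x" by simp
    have sS: "sign_vec x \<in> S" by (auto simp: S_def sign_vec_def sgn_if)
    have "x extreme_point_of Q (sign_vec x)"
      unfolding extreme_point_of_def
    proof (intro conjI ballI)
      show "x \<in> Q (sign_vec x)" using cc by (auto simp: Q_def cc_nondecomposable_def sign_le_def)
      fix a c assume a: "a \<in> Q (sign_vec x)" and c: "c \<in> Q (sign_vec x)"
      show "x \<notin> open_segment a c"
      proof
        assume "x \<in> open_segment a c"
        then obtain u where ac: "a \<noteq> c" and u: "0 < u" "u < 1" and xe: "x = (1 - u) *\<^sub>R a + u *\<^sub>R c"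
          by (auto simp: in_segment)
        have h: "\<forall>x1\<in>P. \<forall>x2\<in>P. \<forall>l::real.
            sign_le (sign_vec x1) (sign_vec x) \<and> sign_le (sign_vec x2) (sign_vec x) \<and>
            0 < l \<and> l < 1 \<and> x = l *\<^sub>R x1 + (1 - l) *\<^sub>R x2 \<longrightarrow> x1 = x2"
          using cc unfolding cc_nondecomposable_def by blast
        have "a \<in> P" "c \<in> P" "sign_le (sign_vec a) (sign_vec x)" "sign_le (sign_vec c) (sign_vec x)"
          using a c by (auto simp: Q_def)
        moreover have "x = (1 - u) *\<^sub>R a + (1 - (1 - u)) *\<^sub>R c" using xe by simp
        moreover have "0 < 1 - u" "1 - u < 1" using u by linarith+
        ultimately have "a = c" using h[rule_format, of a c "1 - u"] by blast
        with ac show False by simp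
      qed
    qed
    with sS show "x \<in> (\<Union>s\<in>S. {v. v extreme_point_of Q s})" by blast
  qed
  with fin show ?thesis by (rule finite_subset[rotated])
qed

end
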